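(* For quantum states $\rho,\sigma\in\mathbb{C}^{d\times d}$, $D_{KL}(\rho\|\sigma) \le \bigl(2 + D_\infty(\rho\|\sigma)\bigr)\cdot D_H^2(\rho\|\sigma)$.
   Context: $D_{KL}(\rho\|\sigma) = \mathrm{tr}(\rho(\ln\rho-\ln\sigma))$. The quantum Hellinger distance squared is $D_H^2(\rho\|\sigma) = \mathrm{tr}((\sqrt\rho - \sqrt\sigma)^2) = 2(1 - \mathrm{tr}(\sqrt\rho\sqrt\sigma))$. With spectral decompositions $\rho = \sum_i p_i|\varphi_i\rangle\langle\varphi_i|$, $\sigma = \sum_j q_j|\psi_j\rangle\langle\psi_j|$, the conventional quantum $\infty$-Rényi divergence is $D_\infty(\rho\|\sigma) = \max\{\ln(p_i/q_j) : p_i|\langle\varphi_i|\psi_j\rangle|^2 \ne 0\}$ (equal to $+\infty$ if some such pair has $q_j = 0$); it is the $\alpha\to\infty$ case of $D_\alpha(\rho\|\sigma) = \frac{1}{\alpha-1}\ln\mathrm{tr}(\rho^\alpha\sigma^{1-\alpha})$. *)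

theory Defs
  imports "Jordan_Normal_Form.Matrix" "HOL-Library.Extended_Real"
begin

definition mtrace :: "complex mat \<Rightarrow> complex" where
  "mtrace A = (\<Sum>i<dim_row A. A $$ (i,i))"

definition cadj :: "complex mat \<Rightarrow> complex mat" where
  "cadj A = mat (dim_col A) (dim_row A) (\<lambda>(i,j). cnj (A $$ (j,i)))"

definition hermitian_mat :: "nat \<Rightarrow> complex mat \<Rightarrow> bool" where
  "hermitian_mat d A \<longleftrightarrow> A \<in> carrier_mat d d \<and> cadj A = A"

definition unitary_mat :: "nat \<Rightarrow> complex mat \<Rightarrow> bool" where
  "unitary_mat d U \<longleftrightarrow> U \<in> carrier_mat d d \<and> U * cadj U = 1\<^sub>m d \<and> cadj U * U = 1\<^sub>m d"

definition psd_mat :: "nat \<Rightarrow> complex mat \<Rightarrow> bool" where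
  "psd_mat d A \<longleftrightarrow> hermitian_mat d A \<and>
     (\<forall>v \<in> carrier_vec d. Re (\<Sum>i<d. cnj (v $ i) * (A *\<^sub>v v) $ i) \<ge> 0)"

definition density_mat :: "nat \<Rightarrow> complex mat \<Rightarrow> bool" where
  "density_mat d A \<longleftrightarrow> psd_mat d A \<and> mtrace A = 1"

definition rdiag :: "nat \<Rightarrow> (nat \<Rightarrow> real) \<Rightarrow> complex mat" where
  "rdiag d l = mat d d (\<lambda>(i,j). if i = j then complex_of_real (l i) else 0)"

definition spec_dec :: "nat \<Rightarrow> complex mat \<Rightarrow> complex mat \<Rightarrow> (nat \<Rightarrow> real) \<Rightarrow> bool" where
  "spec_dec d A U l \<longleftrightarrow> unitary_mat d U \<and> A = U * rdiag d l * cadj U"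

definition mat_fun :: "(real \<Rightarrow> real) \<Rightarrow> complex mat \<Rightarrow> complex mat" where
  "mat_fun f A = (let d = dim_row A in
     (SOME B. \<exists>U l. spec_dec d A U l \<and> B = U * rdiag d (f \<circ> l) * cadj U))"

text \<open>Umegaki relative entropy D_KL = tr(rho (ln rho - ln sigma)); it is +infinity
  unless supp rho is contained in supp sigma. (Isabelle's ln 0 = 0 gives the
  usual convention 0 ln 0 = 0 and ln is applied only on the support.)\<close>
definition D_KL :: "complex mat \<Rightarrow> complex mat \<Rightarrow> ereal" where
  "D_KL \<rho> \<sigma> = (if (\<forall>v \<in> carrier_vec (dim_row \<sigma>). \<sigma> *\<^sub>v v = 0\<^sub>v (dim_row \<sigma>) \<longrightarrow> \<rho> *\<^sub>v v = 0\<^sub>v (dim_row \<rho>))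
     then ereal (Re (mtrace (\<rho> * (mat_fun ln \<rho> - mat_fun ln \<sigma>))))
     else \<infinity>)"

definition D_H2 :: "complex mat \<Rightarrow> complex mat \<Rightarrow> real" where
  "D_H2 \<rho> \<sigma> = Re (mtrace ((mat_fun sqrt \<rho> - mat_fun sqrt \<sigma>) * (mat_fun sqrt \<rho> - mat_fun sqrt \<sigma>)))"

text \<open>D_infinity computed from given spectral decompositions
  rho = sum_i p_i |phi_i><phi_i| (phi_i = i-th column of U),
  sigma = sum_j q_j |psi_j><psi_j| (psi_j = j-th column of V).\<close>
definition D_inf_dec :: "nat \<Rightarrow> complex mat \<Rightarrow> (nat \<Rightarrow> real) \<Rightarrow> complex mat \<Rightarrow> (nat \<Rightarrow> real) \<Rightarrow> ereal" where
  "D_inf_dec d U p V q = (let S = {(i,j). i < d \<and> j < d \<and>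
        p i * (cmod (\<Sum>k<d. cnj (U $$ (k,i)) * V $$ (k,j)))\<^sup>2 \<noteq> 0} in
     if \<exists>(i,j)\<in>S. q j = 0 then \<infinity>
     else Max ((\<lambda>(i,j). ereal (ln (p i / q j))) ` S))"

definition D_inf :: "complex mat \<Rightarrow> complex mat \<Rightarrow> ereal" where
  "D_inf \<rho> \<sigma> = (let d = dim_row \<rho> in
     (SOME r. \<exists>U p V q. spec_dec d \<rho> U p \<and> spec_dec d \<sigma> V q \<and> r = D_inf_dec d U p V q))"

end

theory Submission
  imports Defs "Jordan_Normal_Form.Schur_Decomposition" "HOL-Computational_Algebra.Fundamental_Theorem_Algebra"
begin

lemma cadj_dim[simp]: "dim_row (cadj A) = dim_col A" "dim_col (cadj A) = dim_row A"
  by (auto simp: cadj_def)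

lemma cadj_carrier[simp]: "A \<in> carrier_mat n m \<Longrightarrow> cadj A \<in> carrier_mat m n"
  by (auto simp: cadj_def)

lemma cadj_index[simp]: "i < dim_col A \<Longrightarrow> j < dim_row A \<Longrightarrow> cadj A $$ (i,j) = cnj (A $$ (j,i))"
  by (auto simp: cadj_def)

lemma cadj_cadj[simp]: "cadj (cadj A) = A"
  by (rule eq_matI, auto)

lemma mult_idx:
  assumes "A \<in> carrier_mat n k" "B \<in> carrier_mat k m" "i < n" "j < m"
  shows "(A * B) $$ (i,j) = (\<Sum>l<k. A $$ (i,l) * B $$ (l,j))"
  using assms by (auto simp: scalar_prod_def lessThan_atLeast0 intro!: sum.cong)

lemma cadj_mult:
  assumes "A \<in> carrier_mat n k" "B \<in> carrier_mat k m"
  shows "cadj (A * B) = cadj B * cadj A"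
proof (rule eq_matI)
  fix i j assume ij: "i < dim_row (cadj B * cadj A)" "j < dim_col (cadj B * cadj A)"
  hence i: "i < m" and j: "j < n" using assms by auto
  have "cadj (A * B) $$ (i,j) = cnj ((A * B) $$ (j,i))"
    using assms i j by simp
  also have "\<dots> = cnj (\<Sum>l<k. A $$ (j,l) * B $$ (l,i))"
    by (simp only: mult_idx[OF assms j i])
  also have "\<dots> = (\<Sum>l<k. cadj B $$ (i,l) * cadj A $$ (l,j))"
    using assms i j by (auto intro!: sum.cong simp: mult.commute)
  also have "\<dots> = (cadj B * cadj A) $$ (i,j)"
    using assms i j by (intro mult_idx[symmetric]) auto
  finally show "cadj (A * B) $$ (i,j) = (cadj B * cadj A) $$ (i,j)" .
qed (use assms in auto)

lemma rdiag_carrier[simp]: "rdiag n l \<in> carrier_mat n n" "dim_row (rdiag n l) = n" "dim_col (rdiag n l) = n"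
  by (auto simp: rdiag_def)

lemma rdiag_index[simp]: "i < n \<Longrightarrow> j < n \<Longrightarrow> rdiag n l $$ (i,j) = (if i = j then complex_of_real (l i) else 0)"
  by (auto simp: rdiag_def)

lemma triple_idx:
  assumes X: "X \<in> carrier_mat n k" and Y: "Y \<in> carrier_mat k m" and i: "i < n" and j: "j < m"
  shows "(X * rdiag k l * Y) $$ (i,j) = (\<Sum>t<k. X $$ (i,t) * complex_of_real (l t) * Y $$ (t,j))"
proof -
  have XD: "X * rdiag k l \<in> carrier_mat n k" using X by auto
  have "(X * rdiag k l * Y) $$ (i,j) = (\<Sum>t<k. (X * rdiag k l) $$ (i,t) * Y $$ (t,j))"
    by (rule mult_idx[OF XD Y i j])
  also have "\<dots> = (\<Sum>t<k. X $$ (i,t) * complex_of_real (l t) * Y $$ (t,j))"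
  proof (rule sum.cong[OF refl])
    fix t assume t: "t \<in> {..<k}"
    have "(X * rdiag k l) $$ (i,t) = (\<Sum>s<k. X $$ (i,s) * rdiag k l $$ (s,t))"
      using t by (intro mult_idx[OF X _ i]) auto
    also have "\<dots> = (\<Sum>s<k. if s = t then X $$ (i,t) * complex_of_real (l t) else 0)"
      using t by (intro sum.cong) auto
    also have "\<dots> = X $$ (i,t) * complex_of_real (l t)" using t by simp
    finally show "(X * rdiag k l) $$ (i,t) * Y $$ (t,j) = X $$ (i,t) * complex_of_real (l t) * Y $$ (t,j)" by simp
  qed
  finally show ?thesis .
qed

lemma unitary_carrier: "unitary_mat n U \<Longrightarrow> U \<in> carrier_mat n n"
  by (simp add: unitary_mat_def)

lemma unitaryI: assumes "U \<in> carrier_mat n n" "cadj U * U = 1\<^sub>m n" shows "unitary_mat n U"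
  using assms mat_mult_left_right_inverse[of "cadj U" n U] unfolding unitary_mat_def by auto

lemma unitary_mult:
  assumes U: "unitary_mat n U" and V: "unitary_mat n V"
  shows "unitary_mat n (U * V)"
proof (rule unitaryI)
  have Uc: "U \<in> carrier_mat n n" and Vc: "V \<in> carrier_mat n n" using U V unitary_carrier by auto
  show "U * V \<in> carrier_mat n n" using Uc Vc by auto
  have "cadj (U * V) * (U * V) = cadj V * ((cadj U * U) * V)"
    using Uc Vc by (simp add: cadj_mult[OF Uc Vc] assoc_mult_mat[of _ n n _ n _ n])
  also have "\<dots> = 1\<^sub>m n" using U V Vc unfolding unitary_mat_def by auto
  finally show "cadj (U * V) * (U * V) = 1\<^sub>m n" .
qed

lemma zcnj: "z * cnj z = (complex_of_real (cmod z))\<^sup>2"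
  by (metis complex_norm_square of_real_power)

lemma cscalar_self: "(w::complex vec) \<bullet>c w = complex_of_real (\<Sum>i<dim_vec w. (cmod (w$i))\<^sup>2)"
  by (simp add: scalar_prod_def lessThan_atLeast0 zcnj)

lemma unit_completion:
  fixes u :: "complex vec"
  assumes u: "u \<in> carrier_vec n" and nu: "u \<bullet>c u = 1"
  shows "\<exists>U. unitary_mat n U \<and> (\<forall>i<n. U $$ (i,0) = u $ i)"
proof -
  have u0: "u \<noteq> 0\<^sub>v n" using nu u by auto
  interpret cof_vec_space n "TYPE(complex)" .
  define b where "b = basis_completion u"
  from basis_completion[OF u u0, folded b_def]
  have b: "set b \<subseteq> carrier_vec n" and dist_b: "distinct b" 
    and indep: "\<not> lin_dep (set b)" and hdb: "hd b = u" and len_b: "length b = n" by auto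
  have n: "n > 0" using u0 u by (cases n) auto
  from hdb len_b n obtain vs where bv: "b = u # vs" by (cases b, auto)
  define ws where "ws = gram_schmidt n b"
  from gram_schmidt_result[OF b dist_b indep refl, folded ws_def]
  have ws: "set ws \<subseteq> carrier_vec n" "corthogonal ws" "length ws = n" 
    by (auto simp: len_b)
  from gram_schmidt_hd[OF u, of vs, folded bv] have hdws: "hd ws = u" unfolding ws_def .
  have ws0: "ws ! 0 = u" using hdws n ws(3) by (cases ws) auto
  define nf where "nf w = complex_of_real (sqrt (\<Sum>i<n. (cmod (w$i))\<^sup>2))" for w :: "complex vec"
  define us where "us = map (\<lambda>w. (1 / nf w) \<cdot>\<^sub>v w) ws"
  define U where "U = mat_of_cols n us"
  have lus: "length us = n" using ws by (simp add: us_def)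
  have usc: "\<And>i. i < n \<Longrightarrow> us ! i \<in> carrier_vec n" using ws by (auto simp: us_def)
  have Uc: "U \<in> carrier_mat n n" using mat_of_cols_carrier(1)[of n us] lus by (simp add: U_def)
  have wsc: "\<And>i. i < n \<Longrightarrow> ws ! i \<in> carrier_vec n" using ws by auto
  have Uidx: "U $$ (k,i) = (1 / nf (ws!i)) * (ws!i) $ k" if "k < n" "i < n" for k i
    using that ws lus wsc[of i] by (auto simp: U_def us_def mat_of_cols_def)
  have nfpos: "Re (nf (ws!i)) > 0" "Im (nf (ws!i)) = 0" if "i < n" for i
  proof -
    have "ws!i \<bullet>c ws!i \<noteq> 0" using corthogonalD[OF ws(2), of i i] that ws(3) by auto
    hence "(\<Sum>k<n. (cmod ((ws!i)$k))\<^sup>2) \<noteq> 0" using cscalar_self[of "ws!i"] wsc[OF that] by (metis carrier_vecD of_real_0)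
    moreover have "(\<Sum>k<n. (cmod ((ws!i)$k))\<^sup>2) \<ge> 0" by (intro sum_nonneg) auto
    ultimately show "Re (nf (ws!i)) > 0" "Im (nf (ws!i)) = 0" by (auto simp: nf_def)
  qed
  have "cadj U * U = 1\<^sub>m n"
  proof (rule eq_matI)
    fix i j assume "i < dim_row (1\<^sub>m n)" "j < dim_col (1\<^sub>m n)"
    hence i: "i < n" and j: "j < n" by auto
    have "(cadj U * U) $$ (i,j) = (\<Sum>k<n. cadj U $$ (i,k) * U $$ (k,j))"
      using Uc i j by (intro mult_idx) auto
    also have "\<dots> = (\<Sum>k<n. cnj (1 / nf (ws!i)) * (1 / nf (ws!j)) * ((ws!j) $ k * cnj ((ws!i) $ k)))"
      using Uc i j by (intro sum.cong) (auto simp: Uidx)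
    also have "\<dots> = cnj (1 / nf (ws!i)) * (1 / nf (ws!j)) * (ws!j \<bullet>c ws!i)"
      using wsc[OF i] by (simp add: scalar_prod_def lessThan_atLeast0 sum_distrib_left)
    also have "\<dots> = 1\<^sub>m n $$ (i,j)"
    proof (cases "i = j")
      case True
      define S where "S = (\<Sum>k<n. (cmod ((ws!i)$k))\<^sup>2)"
      have e: "ws!i \<bullet>c ws!i = complex_of_real S"
        unfolding S_def using cscalar_self[of "ws!i"] wsc[OF i] by (metis carrier_vecD)
      have pos: "S > 0" using nfpos[OF i] by (auto simp: nf_def S_def)
      have nfi: "nf (ws!i) = complex_of_real (sqrt S)" by (simp add: nf_def S_def)
      have ss: "sqrt S * sqrt S = S" using pos by simp
      have "cnj (1 / nf (ws!i)) * (1 / nf (ws!i)) * (ws!i \<bullet>c ws!i) = complex_of_real S / (complex_of_real (sqrt S) * complex_of_real (sqrt S))"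
        unfolding e nfi by (simp add: field_simps)
      also have "\<dots> = 1" unfolding of_real_mult[symmetric] ss using pos by simp
      finally show ?thesis using True i by simp
    next
      case False
      then show ?thesis using corthogonalD[OF ws(2), of j i] i j ws(3) by auto
    qed
    finally show "(cadj U * U) $$ (i,j) = 1\<^sub>m n $$ (i,j)" .
  qed (use Uc in auto)
  hence "unitary_mat n U" using unitaryI[OF Uc] by auto
  moreover have "\<forall>i<n. U $$ (i,0) = u $ i"
  proof (intro allI impI)
    fix i assume i: "i < n"
    have "complex_of_real (\<Sum>i<n. (cmod (u $ i))\<^sup>2) = 1" using nu cscalar_self[of u] u by (metis carrier_vecD)
    hence "(\<Sum>i<n. (cmod (u $ i))\<^sup>2) = 1" by (metis of_real_eq_1_iff)
    hence "nf u = 1" by (simp add: nf_def)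
    thus "U $$ (i,0) = u $ i" using Uidx[OF i n] ws0 by simp
  qed
  ultimately show ?thesis by blast
qed

lemma herm_carrier: "hermitian_mat n A \<Longrightarrow> A \<in> carrier_mat n n"
  by (simp add: hermitian_mat_def)

lemma spectral_exists: "hermitian_mat n A \<Longrightarrow> \<exists>U l. spec_dec n A U l"
proof (induction n arbitrary: A)
  case 0
  hence A: "A \<in> carrier_mat 0 0" by (simp add: hermitian_mat_def)
  have "unitary_mat 0 (1\<^sub>m 0)" unfolding unitary_mat_def by (auto intro!: eq_matI)
  moreover have "A = 1\<^sub>m 0 * rdiag 0 (\<lambda>_. 0) * cadj (1\<^sub>m 0)" using A by (auto intro!: eq_matI)
  ultimately show ?case unfolding spec_dec_def by blast
next
  case (Suc m A)
  define n where "n = Suc m"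
  have A: "A \<in> carrier_mat n n" and hA: "cadj A = A" using Suc.prems by (auto simp: hermitian_mat_def n_def)
  have "degree (char_poly A) = n" using degree_monic_char_poly[OF A] by auto
  hence "\<not> constant (poly (char_poly A))" by (simp add: constant_degree n_def)
  then obtain e where "poly (char_poly A) e = 0" using fundamental_theorem_of_algebra by blast
  hence "eigenvalue A e" using eigenvalue_root_char_poly[OF A] by simp
  then obtain v where v: "v \<in> carrier_vec n" "v \<noteq> 0\<^sub>v n" and Av: "A *\<^sub>v v = e \<cdot>\<^sub>v v"
    unfolding eigenvalue_def eigenvector_def using A by auto
  define S where "S = (\<Sum>i<n. (cmod (v$i))\<^sup>2)"
  have vv: "v \<bullet>c v = complex_of_real S" unfolding S_def using cscalar_self[of v] v by (metis carrier_vecD)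
  have Spos: "S > 0"
  proof -
    have "S \<ge> 0" unfolding S_def by (intro sum_nonneg) auto
    moreover have "S \<noteq> 0" using vv v conjugate_square_eq_0_vec[OF v(1)] by auto
    ultimately show ?thesis by auto
  qed
  define c where "c = 1 / complex_of_real (sqrt S)"
  define u where "u = c \<cdot>\<^sub>v v"
  have u: "u \<in> carrier_vec n" using v by (simp add: u_def)
  have Au: "A *\<^sub>v u = e \<cdot>\<^sub>v u"
    unfolding u_def mult_mat_vec[OF A v(1)] Av smult_smult_assoc by (simp add: mult.commute)
  have uu: "u \<bullet>c u = 1"
  proof -
    have ss: "sqrt S * sqrt S = S" using Spos by simp
    have "u \<bullet>c u = c * cnj c * (v \<bullet>c v)"
      using v by (simp add: u_def scalar_prod_def lessThan_atLeast0 sum_distrib_left algebra_simps)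
    also have "\<dots> = complex_of_real S / (complex_of_real (sqrt S) * complex_of_real (sqrt S))"
      unfolding vv c_def by simp
    also have "\<dots> = 1" unfolding of_real_mult[symmetric] ss using Spos by simp
    finally show ?thesis .
  qed
  obtain U where U: "unitary_mat n U" and U0: "\<And>i. i < n \<Longrightarrow> U $$ (i,0) = u $ i"
    using unit_completion[OF u uu] by blast
  have Uc: "U \<in> carrier_mat n n" using U unitary_carrier by auto
  have UU: "cadj U * U = 1\<^sub>m n" and UU': "U * cadj U = 1\<^sub>m n" using U by (auto simp: unitary_mat_def)
  define B where "B = cadj U * (A * U)"
  have Bc: "B \<in> carrier_mat n n" using Uc A unfolding B_def by (metis cadj_carrier mult_carrier_mat)
  have hB: "cadj B = B"
    unfolding B_def using Uc A
    by (simp add: cadj_mult[of _ n n _ n] hA assoc_mult_mat[of _ n n _ n _ n])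
  have AU0: "(A * U) $$ (k,0) = e * U $$ (k,0)" if k: "k < n" for k
  proof -
    have cu: "col U 0 = u" using U0 Uc u by (intro eq_vecI) (auto simp: n_def)
    have "(A * U) $$ (k,0) = (A *\<^sub>v col U 0) $ k" using A Uc k by (simp add: n_def)
    also have "\<dots> = e * U $$ (k,0)" unfolding cu Au using k u U0 by simp
    finally show ?thesis .
  qed
  have B0: "B $$ (i,0) = (if i = 0 then e else 0)" if i: "i < n" for i
  proof -
    have "B $$ (i,0) = (\<Sum>k<n. cadj U $$ (i,k) * (A * U) $$ (k,0))"
      unfolding B_def using Uc A i by (intro mult_idx) (auto simp: n_def)
    also have "\<dots> = e * (\<Sum>k<n. cadj U $$ (i,k) * U $$ (k,0))"
      by (simp add: AU0 sum_distrib_left algebra_simps)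
    also have "(\<Sum>k<n. cadj U $$ (i,k) * U $$ (k,0)) = (cadj U * U) $$ (i,0)"
      using Uc i by (intro mult_idx[symmetric]) (auto simp: n_def)
    finally show ?thesis unfolding UU using i by (simp add: n_def)
  qed
  have ereal: "cnj e = e"
  proof -
    have "cadj B $$ (0,0) = cnj (B $$ (0,0))" using Bc by (simp add: n_def)
    thus ?thesis using hB B0[of 0] by (simp add: n_def)
  qed
  have B0': "B $$ (0,j) = (if j = 0 then e else 0)" if j: "j < n" for j
  proof -
    have "B $$ (0,j) = cadj B $$ (0,j)" using hB by simp
    also have "\<dots> = cnj (B $$ (j,0))" using Bc j by (simp add: n_def)
    finally show ?thesis using B0[OF j] ereal by auto
  qed
  define A3 where "A3 = mat m m (\<lambda>(i,j). B $$ (Suc i, Suc j))"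
  have hA3: "hermitian_mat m A3"
    unfolding hermitian_mat_def
  proof
    show "A3 \<in> carrier_mat m m" by (simp add: A3_def)
    show "cadj A3 = A3"
    proof (rule eq_matI)
      fix i j assume "i < dim_row A3" "j < dim_col A3"
      hence i: "i < m" and j: "j < m" by (auto simp: A3_def)
      have "cadj A3 $$ (i,j) = cnj (B $$ (Suc j, Suc i))" using i j by (simp add: A3_def)
      also have "\<dots> = cadj B $$ (Suc i, Suc j)" using Bc i j by (simp add: n_def)
      finally show "cadj A3 $$ (i,j) = A3 $$ (i,j)" using hB i j by (simp add: A3_def)
    qed (auto simp: A3_def)
  qed
  from Suc.IH[OF hA3] obtain U3 l3 where U3: "unitary_mat m U3" and A3d: "A3 = U3 * rdiag m l3 * cadj U3"
    unfolding spec_dec_def by blast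
  have U3c: "U3 \<in> carrier_mat m m" using U3 unitary_carrier by auto
  have U3U3: "cadj U3 * U3 = 1\<^sub>m m" using U3 by (auto simp: unitary_mat_def)
  define U' where "U' = mat n n (\<lambda>(i,j). if i = 0 \<and> j = 0 then 1 else if i = 0 \<or> j = 0 then 0 else U3 $$ (i-1, j-1))"
  have U'c: "U' \<in> carrier_mat n n" by (simp add: U'_def)
  have U'unit: "unitary_mat n U'"
  proof (rule unitaryI[OF U'c], rule eq_matI)
    fix i j assume "i < dim_row (1\<^sub>m n)" "j < dim_col (1\<^sub>m n)"
    hence i: "i < n" and j: "j < n" by auto
    have "(cadj U' * U') $$ (i,j) = (\<Sum>k<n. cadj U' $$ (i,k) * U' $$ (k,j))"
      using U'c i j by (intro mult_idx) auto
    also have "\<dots> = cnj (U' $$ (0,i)) * U' $$ (0,j) + (\<Sum>k<m. cnj (U' $$ (Suc k,i)) * U' $$ (Suc k,j))"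
      unfolding n_def sum.lessThan_Suc_shift using U'c i j by (simp add: n_def)
    also have "\<dots> = 1\<^sub>m n $$ (i,j)"
    proof (cases "i = 0 \<or> j = 0")
      case True
      then show ?thesis using i j by (auto simp: U'_def n_def)
    next
      case False
      then obtain i' j' where ii: "i = Suc i'" and jj: "j = Suc j'" by (cases i; cases j) auto
      have "(\<Sum>k<m. cnj (U' $$ (Suc k,i)) * U' $$ (Suc k,j)) = (\<Sum>k<m. cadj U3 $$ (i',k) * U3 $$ (k,j'))"
        using i j U3c by (intro sum.cong) (auto simp: U'_def n_def ii jj)
      also have "\<dots> = (cadj U3 * U3) $$ (i',j')"
        using i j U3c by (intro mult_idx[symmetric]) (auto simp: n_def ii jj)
      finally show ?thesis using i j U3U3 by (auto simp: U'_def n_def ii jj)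
    qed
    finally show "(cadj U' * U') $$ (i,j) = 1\<^sub>m n $$ (i,j)" .
  qed (use U'c in auto)
  define l where "l = (\<lambda>i. if i = 0 then Re e else l3 (i - 1))"
  have eRe: "complex_of_real (Re e) = e" using ereal by (metis Reals_cnj_iff complex_is_Real_iff of_real_Re)
  have Bd: "B = U' * rdiag n l * cadj U'"
  proof (rule eq_matI)
    fix i j assume "i < dim_row (U' * rdiag n l * cadj U')" "j < dim_col (U' * rdiag n l * cadj U')"
    hence i: "i < n" and j: "j < n" using U'c by auto
    have "(U' * rdiag n l * cadj U') $$ (i,j) = (\<Sum>t<n. U' $$ (i,t) * complex_of_real (l t) * cadj U' $$ (t,j))"
      using U'c i j by (intro triple_idx) auto
    also have "\<dots> = U' $$ (i,0) * complex_of_real (l 0) * cnj (U' $$ (j,0)) +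
       (\<Sum>t<m. U' $$ (i,Suc t) * complex_of_real (l (Suc t)) * cnj (U' $$ (j,Suc t)))"
      unfolding n_def sum.lessThan_Suc_shift using U'c i j by (simp add: n_def)
    also have "\<dots> = B $$ (i,j)"
    proof (cases "i = 0 \<or> j = 0")
      case True
      then show ?thesis using i j B0 B0' eRe by (auto simp: U'_def n_def l_def)
    next
      case False
      then obtain i' j' where ii: "i = Suc i'" and jj: "j = Suc j'" by (cases i; cases j) auto
      have "(\<Sum>t<m. U' $$ (i,Suc t) * complex_of_real (l (Suc t)) * cnj (U' $$ (j,Suc t))) =
            (\<Sum>t<m. U3 $$ (i',t) * complex_of_real (l3 t) * cadj U3 $$ (t,j'))"
        using i j U3c by (intro sum.cong) (auto simp: U'_def n_def ii jj l_def)
      also have "\<dots> = (U3 * rdiag m l3 * cadj U3) $$ (i',j')"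
        using i j U3c by (intro triple_idx[symmetric]) (auto simp: n_def ii jj)
      also have "\<dots> = B $$ (i,j)" unfolding A3d[symmetric] using i j by (simp add: A3_def n_def ii jj)
      finally show ?thesis using i j by (auto simp: U'_def n_def ii jj)
    qed
    finally show "B $$ (i,j) = (U' * rdiag n l * cadj U') $$ (i,j)" by simp
  qed (use U'c Bc in auto)
  have "A = U * B * cadj U"
  proof -
    have cUc: "cadj U \<in> carrier_mat n n" using Uc by simp
    have AUc: "A * U \<in> carrier_mat n n" using Uc A by simp
    have "U * B = (U * cadj U) * (A * U)" unfolding B_def using assoc_mult_mat[OF Uc cUc AUc] by simp
    hence "U * B = A * U" unfolding UU' using AUc by (simp add: left_mult_one_mat)
    hence "U * B * cadj U = A * (U * cadj U)" using assoc_mult_mat[OF A Uc cUc] by simp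
    thus ?thesis unfolding UU' using A by (simp add: right_mult_one_mat)
  qed
  also have "\<dots> = (U * U') * rdiag n l * cadj (U * U')"
    unfolding Bd using Uc U'c by (simp add: cadj_mult[of _ n n _ n] assoc_mult_mat[of _ n n _ n _ n] mult_carrier_mat[of _ n n _ n])
  finally have "spec_dec n A (U * U') l" unfolding spec_dec_def using unitary_mult[OF U U'unit] by simp
  thus ?case unfolding n_def by blast
qed

lemma unitary_cancel1: "unitary_mat n U \<Longrightarrow> Y \<in> carrier_mat n m \<Longrightarrow> cadj U * (U * Y) = Y"
  using assoc_mult_mat[of "cadj U" n n U n Y m] unfolding unitary_mat_def by (auto simp: left_mult_one_mat)

lemma unitary_cancel2: "unitary_mat n U \<Longrightarrow> Y \<in> carrier_mat n m \<Longrightarrow> U * (cadj U * Y) = Y"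
  using assoc_mult_mat[of U n n "cadj U" n Y m] unfolding unitary_mat_def by (auto simp: left_mult_one_mat)

lemma rdiag_mult_idx:
  assumes "B \<in> carrier_mat n m" "i < n" "j < m"
  shows "(rdiag n a * B) $$ (i,j) = complex_of_real (a i) * B $$ (i,j)"
proof -
  have "(rdiag n a * B) $$ (i,j) = (\<Sum>k<n. rdiag n a $$ (i,k) * B $$ (k,j))"
    using assms by (intro mult_idx) auto
  also have "\<dots> = (\<Sum>k<n. if k = i then complex_of_real (a i) * B $$ (i,j) else 0)"
    using assms by (intro sum.cong) auto
  finally show ?thesis using assms by simp
qed

lemma mult_rdiag_idx:
  assumes "B \<in> carrier_mat m n" "i < m" "j < n"
  shows "(B * rdiag n a) $$ (i,j) = B $$ (i,j) * complex_of_real (a j)"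
proof -
  have "(B * rdiag n a) $$ (i,j) = (\<Sum>k<n. B $$ (i,k) * rdiag n a $$ (k,j))"
    using assms by (intro mult_idx) auto
  also have "\<dots> = (\<Sum>k<n. if k = j then B $$ (i,j) * complex_of_real (a j) else 0)"
    using assms by (intro sum.cong) auto
  finally show ?thesis using assms by simp
qed

lemma fun_calc_unique:
  assumes d1: "spec_dec n A U l" and d2: "spec_dec n A U' l'"
  shows "U * rdiag n (f \<circ> l) * cadj U = U' * rdiag n (f \<circ> l') * cadj U'"
proof -
  have U: "unitary_mat n U" and U': "unitary_mat n U'" using d1 d2 by (auto simp: spec_dec_def)
  have Uc: "U \<in> carrier_mat n n" and U'c: "U' \<in> carrier_mat n n" using U U' unitary_carrier by auto
  have A1: "A = U * rdiag n l * cadj U" and A2: "A = U' * rdiag n l' * cadj U'" using d1 d2 by (auto simp: spec_dec_def)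
  have UU': "U * cadj U = 1\<^sub>m n" "U' * cadj U' = 1\<^sub>m n" "cadj U' * U' = 1\<^sub>m n" using U U' by (auto simp: unitary_mat_def)
  define W where "W = cadj U * U'"
  have Wc: "W \<in> carrier_mat n n" using Uc U'c unfolding W_def by (metis cadj_carrier mult_carrier_mat)
  note simps = assoc_mult_mat[of _ n n _ n _ n] mult_carrier_mat[of _ n n _ n] unitary_cancel1[OF U, of _ n] unitary_cancel2[OF U, of _ n]
     unitary_cancel1[OF U', of _ n] unitary_cancel2[OF U', of _ n]
  have e1: "cadj U * (A * U') = rdiag n l * W" unfolding A1 W_def using Uc U'c by (simp add: simps)
  have e2: "cadj U * (A * U') = W * rdiag n l'" unfolding A2 W_def using Uc U'c UU' by (simp add: simps)
  have comm: "rdiag n (f \<circ> l) * W = W * rdiag n (f \<circ> l')"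
  proof (rule eq_matI)
    fix i j assume "i < dim_row (W * rdiag n (f \<circ> l'))" "j < dim_col (W * rdiag n (f \<circ> l'))"
    hence i: "i < n" and j: "j < n" using Wc by auto
    have "(rdiag n l * W) $$ (i,j) = (W * rdiag n l') $$ (i,j)" using e1 e2 by simp
    hence "complex_of_real (l i) * W $$ (i,j) = W $$ (i,j) * complex_of_real (l' j)"
      using rdiag_mult_idx[OF Wc i j] mult_rdiag_idx[OF Wc i j] by simp
    hence "W $$ (i,j) = 0 \<or> l i = l' j" by (auto simp: mult.commute)
    hence "complex_of_real (f (l i)) * W $$ (i,j) = W $$ (i,j) * complex_of_real (f (l' j))" by auto
    thus "(rdiag n (f \<circ> l) * W) $$ (i,j) = (W * rdiag n (f \<circ> l')) $$ (i,j)"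
      using rdiag_mult_idx[OF Wc i j] mult_rdiag_idx[OF Wc i j] by simp
  qed (use Wc in auto)
  have "U * rdiag n (f \<circ> l) * cadj U = U * ((rdiag n (f \<circ> l) * W) * cadj U')"
    unfolding W_def using Uc U'c UU' by (simp add: simps)
  also have "\<dots> = U' * rdiag n (f \<circ> l') * cadj U'"
    unfolding comm unfolding W_def using Uc U'c by (simp add: simps)
  finally show ?thesis .
qed

lemma spec_dec_dim: "spec_dec n A U l \<Longrightarrow> A \<in> carrier_mat n n"
  unfolding spec_dec_def unitary_mat_def by auto

lemma mat_fun_eq:
  assumes d: "spec_dec n A U l"
  shows "mat_fun f A = U * rdiag n (f \<circ> l) * cadj U"
proof -
  have dr: "dim_row A = n" using spec_dec_dim[OF d] by auto
  let ?P = "\<lambda>B. \<exists>U l. spec_dec n A U l \<and> B = U * rdiag n (f \<circ> l) * cadj U"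
  have ex: "\<exists>B. ?P B" using d by blast
  from someI_ex[OF ex] obtain U' l' where d': "spec_dec n A U' l'"
    and eq: "(SOME B. ?P B) = U' * rdiag n (f \<circ> l') * cadj U'" by blast
  show ?thesis unfolding mat_fun_def Let_def dr eq using fun_calc_unique[OF d' d] .
qed

lemma mtrace_idx: "A \<in> carrier_mat n n \<Longrightarrow> mtrace A = (\<Sum>i<n. A $$ (i,i))"
  by (simp add: mtrace_def)

lemma mtrace_mult:
  assumes A: "A \<in> carrier_mat n k" and B: "B \<in> carrier_mat k n"
  shows "mtrace (A * B) = (\<Sum>i<n. \<Sum>l<k. A $$ (i,l) * B $$ (l,i))"
proof -
  have "mtrace (A * B) = (\<Sum>i<n. (A * B) $$ (i,i))" using A B by (simp add: mtrace_def)
  also have "\<dots> = (\<Sum>i<n. \<Sum>l<k. A $$ (i,l) * B $$ (l,i))"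
    by (intro sum.cong refl mult_idx[OF A B]) auto
  finally show ?thesis .
qed

lemma mtrace_comm:
  assumes A: "A \<in> carrier_mat n k" and B: "B \<in> carrier_mat k n"
  shows "mtrace (A * B) = mtrace (B * A)"
proof -
  have "mtrace (A * B) = (\<Sum>i<n. \<Sum>l<k. A $$ (i,l) * B $$ (l,i))"
    using A B by (rule mtrace_mult)
  also have "\<dots> = (\<Sum>l<k. \<Sum>i<n. B $$ (l,i) * A $$ (i,l))"
    by (subst sum.swap) (simp add: mult.commute)
  also have "\<dots> = mtrace (B * A)"
    using B A by (rule mtrace_mult[symmetric])
  finally show ?thesis .
qed

lemma mtrace_mult_minus_right:
  assumes A: "A \<in> carrier_mat n n" and B: "B \<in> carrier_mat n n" and C: "C \<in> carrier_mat n n"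
  shows "mtrace (A * (B - C)) = mtrace (A * B) - mtrace (A * C)"
proof -
  have BC: "B - C \<in> carrier_mat n n" using C by (rule minus_carrier_mat)
  have "mtrace (A * (B - C)) = (\<Sum>i<n. \<Sum>l<n. A $$ (i,l) * (B - C) $$ (l,i))"
    using A BC by (rule mtrace_mult)
  also have "\<dots> = (\<Sum>i<n. \<Sum>l<n. A $$ (i,l) * B $$ (l,i)) - (\<Sum>i<n. \<Sum>l<n. A $$ (i,l) * C $$ (l,i))"
    using B C by (simp add: sum_subtractf[symmetric] algebra_simps)
  also have "\<dots> = mtrace (A * B) - mtrace (A * C)"
    using A B C by (simp add: mtrace_mult[of _ n n])
  finally show ?thesis .
qed

lemma mtrace_minus_mult:
  assumes A: "A \<in> carrier_mat n n" and B: "B \<in> carrier_mat n n" and C: "C \<in> carrier_mat n n"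
  shows "mtrace ((A - B) * C) = mtrace (A * C) - mtrace (B * C)"
proof -
  have AB: "A - B \<in> carrier_mat n n" using B by (rule minus_carrier_mat)
  have "mtrace ((A - B) * C) = (\<Sum>i<n. \<Sum>l<n. (A - B) $$ (i,l) * C $$ (l,i))"
    using AB C by (rule mtrace_mult)
  also have "\<dots> = (\<Sum>i<n. \<Sum>l<n. A $$ (i,l) * C $$ (l,i)) - (\<Sum>i<n. \<Sum>l<n. B $$ (i,l) * C $$ (l,i))"
    using A B by (simp add: sum_subtractf[symmetric] algebra_simps)
  also have "\<dots> = mtrace (A * C) - mtrace (B * C)"
    using A B C by (simp add: mtrace_mult[of _ n n])
  finally show ?thesis .
qed

lemma unitary_cadj: "unitary_mat n U \<Longrightarrow> unitary_mat n (cadj U)"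
  unfolding unitary_mat_def by auto

lemma unitary_rows: 
  assumes U: "unitary_mat n W" and i: "i < n"
  shows "(\<Sum>j<n. (cmod (W $$ (i,j)))\<^sup>2) = 1" "(\<Sum>j<n. (cmod (W $$ (j,i)))\<^sup>2) = 1"
proof -
  have Wc: "W \<in> carrier_mat n n" using U unitary_carrier by auto
  have "(W * cadj W) $$ (i,i) = (\<Sum>j<n. W $$ (i,j) * cadj W $$ (j,i))"
    using Wc i by (intro mult_idx) auto
  also have "\<dots> = complex_of_real (\<Sum>j<n. (cmod (W $$ (i,j)))\<^sup>2)"
    using Wc i by (simp add: zcnj)
  finally have "complex_of_real (\<Sum>j<n. (cmod (W $$ (i,j)))\<^sup>2) = 1"
    using U i unfolding unitary_mat_def by simp
  thus "(\<Sum>j<n. (cmod (W $$ (i,j)))\<^sup>2) = 1" by (metis of_real_eq_1_iff)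
  have "(cadj W * W) $$ (i,i) = (\<Sum>j<n. cadj W $$ (i,j) * W $$ (j,i))"
    using Wc i by (intro mult_idx) auto
  also have "\<dots> = complex_of_real (\<Sum>j<n. (cmod (W $$ (j,i)))\<^sup>2)"
    using Wc i by (simp add: zcnj mult.commute)
  finally have "complex_of_real (\<Sum>j<n. (cmod (W $$ (j,i)))\<^sup>2) = 1"
    using U i unfolding unitary_mat_def by simp
  thus "(\<Sum>j<n. (cmod (W $$ (j,i)))\<^sup>2) = 1" by (metis of_real_eq_1_iff)
qed

lemma trace_formula:
  assumes U: "unitary_mat n U" and V: "unitary_mat n V"
  shows "mtrace ((U * rdiag n a * cadj U) * (V * rdiag n b * cadj V)) =
    complex_of_real (\<Sum>i<n. \<Sum>j<n. a i * b j * (cmod ((cadj U * V) $$ (i,j)))\<^sup>2)"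
proof -
  have Uc: "U \<in> carrier_mat n n" and Vc: "V \<in> carrier_mat n n" using U V unitary_carrier by auto
  define W where "W = cadj U * V"
  have Wc: "W \<in> carrier_mat n n" using Uc Vc unfolding W_def by (metis cadj_carrier mult_carrier_mat)
  have cW: "cadj W = cadj V * U" unfolding W_def using Uc Vc by (simp add: cadj_mult[of _ n n _ n])
  define M where "M = rdiag n a * (W * rdiag n b * cadj W)"
  have Mc: "M \<in> carrier_mat n n" using Wc unfolding M_def
    by (metis cadj_carrier mult_carrier_mat rdiag_carrier(1))
  note simps = assoc_mult_mat[of _ n n _ n _ n] mult_carrier_mat[of _ n n _ n]
  have UU: "U * cadj U = 1\<^sub>m n" using U by (simp add: unitary_mat_def)
  have "(U * rdiag n a * cadj U) * (V * rdiag n b * cadj V) = U * (M * cadj U)"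
    unfolding M_def W_def using Uc Vc UU by (simp add: simps cadj_mult[of _ n n _ n])
  hence "mtrace ((U * rdiag n a * cadj U) * (V * rdiag n b * cadj V)) = mtrace (U * (M * cadj U))" by simp
  also have "\<dots> = mtrace ((M * cadj U) * U)"
    using Uc Mc by (intro mtrace_comm[of _ n n]) auto
  also have "(M * cadj U) * U = M"
  proof -
    have cUc: "cadj U \<in> carrier_mat n n" using Uc by simp
    have "(M * cadj U) * U = M * (cadj U * U)" using assoc_mult_mat[OF Mc cUc Uc] .
    also have "cadj U * U = 1\<^sub>m n" using U by (simp add: unitary_mat_def)
    finally show ?thesis using right_mult_one_mat[OF Mc] by simp
  qed
  also have "mtrace M = (\<Sum>i<n. M $$ (i,i))" using Mc by (rule mtrace_idx)
  also have "\<dots> = (\<Sum>i<n. complex_of_real (\<Sum>j<n. a i * b j * (cmod (W $$ (i,j)))\<^sup>2))"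
  proof (rule sum.cong[OF refl])
    fix i assume i: "i \<in> {..<n}"
    have WW: "W * rdiag n b * cadj W \<in> carrier_mat n n" using Wc by (metis cadj_carrier mult_carrier_mat rdiag_carrier(1))
    have "M $$ (i,i) = complex_of_real (a i) * (W * rdiag n b * cadj W) $$ (i,i)"
      unfolding M_def using i WW by (intro rdiag_mult_idx) auto
    also have "(W * rdiag n b * cadj W) $$ (i,i) = (\<Sum>j<n. W $$ (i,j) * complex_of_real (b j) * cadj W $$ (j,i))"
      using i Wc by (intro triple_idx) auto
    also have "\<dots> = (\<Sum>j<n. complex_of_real (b j * (cmod (W $$ (i,j)))\<^sup>2))"
      using i Wc by (intro sum.cong) (auto simp: zcnj)
    finally show "M $$ (i,i) = complex_of_real (\<Sum>j<n. a i * b j * (cmod (W $$ (i,j)))\<^sup>2)"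
      by (simp add: sum_distrib_left mult.assoc)
  qed
  finally show ?thesis unfolding W_def by simp
qed

lemma trace_spec:
  assumes d: "spec_dec n A U l"
  shows "mtrace A = complex_of_real (\<Sum>i<n. l i)"
proof -
  have U: "unitary_mat n U" and A: "A = U * rdiag n l * cadj U" using d by (auto simp: spec_dec_def)
  have Uc: "U \<in> carrier_mat n n" using U unitary_carrier by auto
  have "mtrace A = mtrace ((U * rdiag n l) * cadj U)" using A by simp
  also have "\<dots> = mtrace (cadj U * (U * rdiag n l))"
    using Uc by (intro mtrace_comm[of _ n n]) auto
  also have "cadj U * (U * rdiag n l) = rdiag n l" using unitary_cancel1[OF U, of "rdiag n l" n] by simp
  also have "mtrace (rdiag n l) = complex_of_real (\<Sum>i<n. l i)" by (simp add: mtrace_idx[of _ n])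
  finally show ?thesis .
qed

lemma psd_eig_nonneg:
  assumes p: "psd_mat n A" and d: "spec_dec n A U l" and i: "i < n"
  shows "l i \<ge> 0"
proof -
  have U: "unitary_mat n U" and A: "A = U * rdiag n l * cadj U" using d by (auto simp: spec_dec_def)
  have Uc: "U \<in> carrier_mat n n" using U unitary_carrier by auto
  have Ac: "A \<in> carrier_mat n n" using spec_dec_dim[OF d] .
  define v where "v = col U i"
  have v: "v \<in> carrier_vec n" using Uc unfolding v_def by (metis carrier_matD(1) carrier_vec_dim_vec dim_col)
  have cUc: "cadj U \<in> carrier_mat n n" using Uc by simp
  have UDc: "U * rdiag n l \<in> carrier_mat n n" using Uc by (metis mult_carrier_mat rdiag_carrier(1))
  have "A * U = (U * rdiag n l) * (cadj U * U)" unfolding A using assoc_mult_mat[OF UDc cUc Uc] .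
  also have "cadj U * U = 1\<^sub>m n" using U by (simp add: unitary_mat_def)
  finally have "A * U = U * rdiag n l" using right_mult_one_mat[OF UDc] by simp
  hence "cadj U * (A * U) = rdiag n l" using unitary_cancel1[OF U, of "rdiag n l" n] by simp
  hence "(cadj U * (A * U)) $$ (i,i) = complex_of_real (l i)" using i by simp
  moreover have "(cadj U * (A * U)) $$ (i,i) = (\<Sum>k<n. cnj (v $ k) * (A *\<^sub>v v) $ k)"
  proof -
    have "(cadj U * (A * U)) $$ (i,i) = (\<Sum>k<n. cadj U $$ (i,k) * (A * U) $$ (k,i))"
      using Uc Ac i by (intro mult_idx) auto
    also have "\<dots> = (\<Sum>k<n. cnj (v $ k) * (A *\<^sub>v v) $ k)"
      using Uc Ac i by (intro sum.cong) (auto simp: v_def)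
    finally show ?thesis .
  qed
  moreover have "Re (\<Sum>k<n. cnj (v $ k) * (A *\<^sub>v v) $ k) \<ge> 0"
    by (rule bspec[OF conjunct2[OF p[unfolded psd_mat_def]] v])
  ultimately show ?thesis by simp
qed

lemma ln_one_minus_upper2:
  fixes x :: real
  assumes "0 \<le> x" "x < 1"
  shows "ln (1 - x) \<le> - x - x\<^sup>2 / 2"
proof -
  define f where "f y = ln (1 - y) + y + y\<^sup>2 / 2" for y :: real
  have d: "(f has_real_derivative (- y\<^sup>2 / (1 - y))) (at y)" if "y < 1" for y
  proof -
    have "(f has_real_derivative (- 1 / (1 - y) + 1 + y)) (at y)"
      unfolding f_def using that by (auto intro!: derivative_eq_intros simp: power2_eq_square)
    moreover have "- 1 / (1 - y) + 1 + y = - y\<^sup>2 / (1 - y)" using that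
      by (simp add: field_simps power2_eq_square)
    ultimately show ?thesis by simp
  qed
  have "f x \<le> f 0"
  proof (cases "x = 0")
    case False
    hence x0: "0 < x" using assms by auto
    show ?thesis
    proof (rule DERIV_nonpos_imp_nonincreasing[of 0 x f])
      show "0 \<le> x" using assms by simp
      fix y assume y: "0 \<le> y" "y \<le> x"
      show "\<exists>d. (f has_real_derivative d) (at y) \<and> d \<le> 0"
        using d[of y] y assms by (intro exI[of _ "- y\<^sup>2 / (1 - y)"]) auto
    qed
  qed simp
  thus ?thesis by (simp add: f_def)
qed

lemma ln_le_half_diff:
  fixes t :: real
  assumes "1 \<le> t"
  shows "ln t \<le> (t - 1 / t) / 2"
proof -
  define f where "f y = (y - 1 / y) / 2 - ln y" for y :: real
  have d: "(f has_real_derivative ((y - 1)\<^sup>2 / (2 * y\<^sup>2))) (at y)" if "0 < y" for y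
  proof -
    have "(f has_real_derivative ((1 + 1 / y\<^sup>2) / 2 - 1 / y)) (at y)"
      unfolding f_def using that by (auto intro!: derivative_eq_intros simp: power2_eq_square field_simps)
    moreover have "(1 + 1 / y\<^sup>2) / 2 - 1 / y = (y - 1)\<^sup>2 / (2 * y\<^sup>2)" using that
      by (simp add: field_simps power2_eq_square)
    ultimately show ?thesis by simp
  qed
  have "f 1 \<le> f t"
  proof (rule DERIV_nonneg_imp_nondecreasing[of 1 t f])
    show "1 \<le> t" by fact
    fix y assume y: "1 \<le> y" "y \<le> t"
    show "\<exists>d. (f has_real_derivative d) (at y) \<and> 0 \<le> d"
      using d[of y] y by (intro exI[of _ "(y - 1)\<^sup>2 / (2 * y\<^sup>2)"]) auto
  qed
  thus ?thesis by (simp add: f_def)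
qed

lemma key_t:
  fixes t M :: real
  assumes t: "0 < t" and M: "2 * ln t \<le> M" and M0: "0 \<le> M"
  shows "2 * t\<^sup>2 * ln t - t\<^sup>2 + 1 \<le> (2 + M) * (t - 1)\<^sup>2"
proof (cases "t \<le> 1")
  case True
  define s where "s = 1 - t"
  have s: "0 \<le> s" "s < 1" using True t by (auto simp: s_def)
  have "ln t \<le> - s - s\<^sup>2 / 2" using ln_one_minus_upper2[OF s] by (simp add: s_def)
  hence "2 * t\<^sup>2 * ln t \<le> 2 * t\<^sup>2 * (- s - s\<^sup>2 / 2)" using t by (intro mult_left_mono) auto
  moreover have "2 * t\<^sup>2 * (- s - s\<^sup>2 / 2) - t\<^sup>2 + 1 = 2 * (t - 1)\<^sup>2 - s ^ 4"
    unfolding s_def by (simp add: power2_eq_square power4_eq_xxxx field_simps)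
  moreover have "2 * (t - 1)\<^sup>2 \<le> (2 + M) * (t - 1)\<^sup>2" using M0 by (intro mult_right_mono) auto
  moreover have "s ^ 4 \<ge> 0" using s by simp
  ultimately show ?thesis by linarith
next
  case False
  hence t1: "1 \<le> t" by simp
  have l: "ln t \<le> (t\<^sup>2 - 1) / (2 * t)" using ln_le_half_diff[OF t1] t
    by (simp add: field_simps power2_eq_square)
  have "2 * ln t * (2 * t - 1) \<le> (t\<^sup>2 - 1) / t * (2 * t - 1)"
    using l t1 by (intro mult_right_mono) (auto simp: field_simps)
  also have "(t\<^sup>2 - 1) / t * (2 * t - 1) = (t - 1) * (3 * t - 1) - (t - 1) ^ 3 / t"
    using t by (simp add: field_simps power2_eq_square power3_eq_cube)
  also have "\<dots> \<le> (t - 1) * (3 * t - 1)" using t t1 by simp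
  finally have a: "2 * ln t * (2 * t - 1) \<le> (t - 1) * (3 * t - 1)" .
  have b: "(2 + 2 * ln t) * (t - 1)\<^sup>2 \<le> (2 + M) * (t - 1)\<^sup>2" using M by (intro mult_right_mono) auto
  have "2 * t\<^sup>2 * ln t - t\<^sup>2 + 1 = (2 + 2 * ln t) * (t - 1)\<^sup>2 + (2 * ln t * (2 * t - 1) - (t - 1) * (3 * t - 1))"
    by (simp add: power2_eq_square algebra_simps)
  thus ?thesis using a b by linarith
qed

lemma key_pq:
  fixes p q M :: real
  assumes p: "0 < p" and q: "0 < q" and M: "ln p - ln q \<le> M" and M0: "0 \<le> M"
  shows "p * (ln p - ln q) - p + q \<le> (2 + M) * (sqrt p - sqrt q)\<^sup>2"
proof -
  define a where "a = sqrt p"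
  define b where "b = sqrt q"
  have a: "a > 0" and b: "b > 0" using p q by (auto simp: a_def b_def)
  have pa: "p = a\<^sup>2" and qb: "q = b\<^sup>2" using p q by (auto simp: a_def b_def)
  define t where "t = a / b"
  have t: "t > 0" using a b by (simp add: t_def)
  have lt: "ln p - ln q = 2 * ln t" unfolding pa qb t_def using a b
    by (simp add: ln_div ln_mult power2_eq_square)
  have "2 * t\<^sup>2 * ln t - t\<^sup>2 + 1 \<le> (2 + M) * (t - 1)\<^sup>2" using key_t[OF t] M M0 lt by simp
  hence "b\<^sup>2 * (2 * t\<^sup>2 * ln t - t\<^sup>2 + 1) \<le> b\<^sup>2 * ((2 + M) * (t - 1)\<^sup>2)" by (intro mult_left_mono) auto
  moreover have "b\<^sup>2 * (2 * t\<^sup>2 * ln t - t\<^sup>2 + 1) = a\<^sup>2 * (2 * ln t) - a\<^sup>2 + b\<^sup>2"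
    unfolding t_def using b by (simp add: field_simps power2_eq_square)
  moreover have "a\<^sup>2 * (2 * ln t) - a\<^sup>2 + b\<^sup>2 = p * (ln p - ln q) - p + q"
    unfolding lt using pa qb by simp
  moreover have "b\<^sup>2 * ((2 + M) * (t - 1)\<^sup>2) = (2 + M) * (sqrt p - sqrt q)\<^sup>2"
    unfolding a_def[symmetric] b_def[symmetric] t_def using b by (simp add: field_simps power2_eq_square)
  ultimately show ?thesis by simp
qed

lemma mat_vec_idx:
  assumes "A \<in> carrier_mat n m" "x \<in> carrier_vec m" "i < n"
  shows "(A *\<^sub>v x) $ i = (\<Sum>k<m. A $$ (i,k) * x $ k)"
  using assms by (auto simp: scalar_prod_def lessThan_atLeast0 intro!: sum.cong)

lemma mat_vec_zero: "A \<in> carrier_mat n m \<Longrightarrow> A *\<^sub>v 0\<^sub>v m = 0\<^sub>v n"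
  by (intro eq_vecI) (auto simp: scalar_prod_def)

lemma unitary_vec_cancel:
  assumes U: "unitary_mat n U" and x: "x \<in> carrier_vec n"
  shows "cadj U *\<^sub>v (U *\<^sub>v x) = x" "U *\<^sub>v (cadj U *\<^sub>v x) = x"
proof -
  have Uc: "U \<in> carrier_mat n n" using U unitary_carrier by auto
  have cUc: "cadj U \<in> carrier_mat n n" using Uc by simp
  have "cadj U *\<^sub>v (U *\<^sub>v x) = (cadj U * U) *\<^sub>v x" using assoc_mult_mat_vec[OF cUc Uc x] by simp
  also have "cadj U * U = 1\<^sub>m n" using U by (simp add: unitary_mat_def)
  finally show "cadj U *\<^sub>v (U *\<^sub>v x) = x" using x by simp
  have "U *\<^sub>v (cadj U *\<^sub>v x) = (U * cadj U) *\<^sub>v x" using assoc_mult_mat_vec[OF Uc cUc x] by simp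
  also have "U * cadj U = 1\<^sub>m n" using U by (simp add: unitary_mat_def)
  finally show "U *\<^sub>v (cadj U *\<^sub>v x) = x" using x by simp
qed

lemma spec_vec:
  assumes d: "spec_dec n A U l" and x: "x \<in> carrier_vec n"
  shows "A *\<^sub>v x = U *\<^sub>v (rdiag n l *\<^sub>v (cadj U *\<^sub>v x))"
proof -
  have U: "unitary_mat n U" and A: "A = U * rdiag n l * cadj U" using d by (auto simp: spec_dec_def)
  have Uc: "U \<in> carrier_mat n n" using U unitary_carrier by auto
  have cUc: "cadj U \<in> carrier_mat n n" using Uc by simp
  have UDc: "U * rdiag n l \<in> carrier_mat n n" using Uc by (metis mult_carrier_mat rdiag_carrier(1))
  have cx: "cadj U *\<^sub>v x \<in> carrier_vec n" using cUc x by simp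
  have "A *\<^sub>v x = (U * rdiag n l) *\<^sub>v (cadj U *\<^sub>v x)" unfolding A using assoc_mult_mat_vec[OF UDc cUc x] .
  also have "\<dots> = U *\<^sub>v (rdiag n l *\<^sub>v (cadj U *\<^sub>v x))" using assoc_mult_mat_vec[OF Uc _ cx] by simp
  finally show ?thesis .
qed

lemma kernel_cond:
  assumes d1: "spec_dec n \<rho> U p" and d2: "spec_dec n \<sigma> V q"
    and B: "\<And>i j. i < n \<Longrightarrow> j < n \<Longrightarrow> q j = 0 \<Longrightarrow> p i * (cmod ((cadj U * V) $$ (i,j)))\<^sup>2 = 0"
    and v: "v \<in> carrier_vec n" and sv: "\<sigma> *\<^sub>v v = 0\<^sub>v n"
  shows "\<rho> *\<^sub>v v = 0\<^sub>v n"
proof -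
  have U: "unitary_mat n U" using d1 by (simp add: spec_dec_def)
  have V: "unitary_mat n V" using d2 by (simp add: spec_dec_def)
  have Uc: "U \<in> carrier_mat n n" and Vc: "V \<in> carrier_mat n n" using U V unitary_carrier by auto
  have cUc: "cadj U \<in> carrier_mat n n" and cVc: "cadj V \<in> carrier_mat n n" using Uc Vc by auto
  define w where "w = cadj V *\<^sub>v v"
  have w: "w \<in> carrier_vec n" using cVc v by (simp add: w_def)
  have vw: "v = V *\<^sub>v w" unfolding w_def using unitary_vec_cancel(2)[OF V v] by simp
  have Dw: "rdiag n q *\<^sub>v w = 0\<^sub>v n"
  proof -
    have Dwc: "rdiag n q *\<^sub>v w \<in> carrier_vec n" using w by (metis mult_mat_vec_carrier rdiag_carrier(1))
    have "0\<^sub>v n = cadj V *\<^sub>v (\<sigma> *\<^sub>v v)" using sv mat_vec_zero[OF cVc] by simp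
    also have "\<sigma> *\<^sub>v v = V *\<^sub>v (rdiag n q *\<^sub>v w)" unfolding w_def by (rule spec_vec[OF d2 v])
    also have "cadj V *\<^sub>v \<dots> = rdiag n q *\<^sub>v w" by (rule unitary_vec_cancel(1)[OF V Dwc])
    finally show ?thesis by simp
  qed
  have qw: "q j * w $ j = 0" if j: "j < n" for j
  proof -
    have "(rdiag n q *\<^sub>v w) $ j = (\<Sum>k<n. rdiag n q $$ (j,k) * w $ k)"
      using w j by (intro mat_vec_idx) auto
    also have "\<dots> = (\<Sum>k<n. if k = j then complex_of_real (q j) * w $ j else 0)"
      using j by (intro sum.cong) auto
    finally have "complex_of_real (q j) * w $ j = 0" using Dw j by simp
    thus ?thesis by simp
  qed
  define W where "W = cadj U * V"
  have Wc: "W \<in> carrier_mat n n" using cUc Vc unfolding W_def by (metis mult_carrier_mat)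
  have Uv: "cadj U *\<^sub>v v = W *\<^sub>v w" unfolding vw W_def using assoc_mult_mat_vec[OF cUc Vc w] by simp
  have Wwc: "W *\<^sub>v w \<in> carrier_vec n" using Wc w by (metis mult_mat_vec_carrier)
  have "rdiag n p *\<^sub>v (W *\<^sub>v w) = 0\<^sub>v n"
  proof (rule eq_vecI)
    fix i assume "i < dim_vec (0\<^sub>v n :: complex vec)"
    hence i: "i < n" by simp
    have "(rdiag n p *\<^sub>v (W *\<^sub>v w)) $ i = (\<Sum>k<n. rdiag n p $$ (i,k) * (W *\<^sub>v w) $ k)"
      using Wwc i by (intro mat_vec_idx) auto
    also have "\<dots> = complex_of_real (p i) * (W *\<^sub>v w) $ i"
    proof -
      have "(\<Sum>k<n. rdiag n p $$ (i,k) * (W *\<^sub>v w) $ k) = (\<Sum>k<n. if k = i then complex_of_real (p i) * (W *\<^sub>v w) $ i else 0)"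
        using i by (intro sum.cong) auto
      thus ?thesis using i by simp
    qed
    also have "(W *\<^sub>v w) $ i = (\<Sum>k<n. W $$ (i,k) * w $ k)" using Wc w i by (intro mat_vec_idx) auto
    also have "complex_of_real (p i) * \<dots> = (\<Sum>k<n. complex_of_real (p i) * W $$ (i,k) * w $ k)"
      by (simp add: sum_distrib_left mult.assoc)
    also have "\<dots> = 0"
    proof (rule sum.neutral, rule ballI)
      fix k assume k: "k \<in> {..<n}"
      show "complex_of_real (p i) * W $$ (i,k) * w $ k = 0"
      proof (cases "w $ k = 0")
        case False
        hence "q k = 0" using qw[of k] k by simp
        hence "p i * (cmod (W $$ (i,k)))\<^sup>2 = 0" using B[of i k] i k by (simp add: W_def)
        thus ?thesis by simp
      qed simp
    qed
    finally show "(rdiag n p *\<^sub>v (W *\<^sub>v w)) $ i = 0\<^sub>v n $ i" using i by simp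
  qed simp
  hence "\<rho> *\<^sub>v v = U *\<^sub>v 0\<^sub>v n" using spec_vec[OF d1 v] Uv by simp
  thus ?thesis using mat_vec_zero[OF Uc] by simp
qed

lemma trace_same:
  assumes U: "unitary_mat n U"
  shows "mtrace ((U * rdiag n a * cadj U) * (U * rdiag n b * cadj U)) = complex_of_real (\<Sum>i<n. a i * b i)"
proof -
  have "mtrace ((U * rdiag n a * cadj U) * (U * rdiag n b * cadj U)) =
     complex_of_real (\<Sum>i<n. \<Sum>j<n. a i * b j * (cmod ((cadj U * U) $$ (i,j)))\<^sup>2)"
    by (rule trace_formula[OF U U])
  also have "cadj U * U = 1\<^sub>m n" using U by (simp add: unitary_mat_def)
  also have "(\<Sum>i<n. \<Sum>j<n. a i * b j * (cmod (1\<^sub>m n $$ (i,j)))\<^sup>2) = (\<Sum>i<n. a i * b i)"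
  proof (rule sum.cong[OF refl])
    fix i assume i: "i \<in> {..<n}"
    have "(\<Sum>j<n. a i * b j * (cmod (1\<^sub>m n $$ (i,j)))\<^sup>2) = (\<Sum>j<n. if j = i then a i * b i else 0)"
      using i by (intro sum.cong) auto
    also have "\<dots> = a i * b i" using i by simp
    finally show "(\<Sum>j<n. a i * b j * (cmod (1\<^sub>m n $$ (i,j)))\<^sup>2) = a i * b i" .
  qed
  finally show ?thesis .
qed

lemma term_bound:
  fixes c p q M :: real
  assumes c: "c \<ge> 0" and p: "p \<ge> 0" and q: "q \<ge> 0" and M0: "M \<ge> 0"
    and h: "p * c \<noteq> 0 \<Longrightarrow> q > 0 \<and> ln (p / q) \<le> M"
  shows "c * (p * (ln p - ln q) - p + q) \<le> (2 + M) * (c * (sqrt p - sqrt q)\<^sup>2)"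
proof (cases "c = 0")
  case True then show ?thesis by simp
next
  case False
  hence c0: "c > 0" using c by simp
  show ?thesis
  proof (cases "p = 0")
    case True
    have "c * q \<le> (2 + M) * (c * q)" using c q M0 by (simp add: mult_nonneg_nonneg algebra_simps)
    thus ?thesis using True q by simp
  next
    case False
    hence p0: "p > 0" using p by simp
    from h have q0: "q > 0" and lM: "ln (p / q) \<le> M" using p0 c0 by auto
    have "ln p - ln q \<le> M" using lM p0 q0 by (simp add: ln_div)
    from key_pq[OF p0 q0 this M0]
    have "c * (p * (ln p - ln q) - p + q) \<le> c * ((2 + M) * (sqrt p - sqrt q)\<^sup>2)"
      using c by (intro mult_left_mono) auto
    thus ?thesis by (simp add: algebra_simps)
  qed
qed

theorem theorem2p32:
  fixes d :: nat and \<rho> \<sigma> :: "complex mat"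
  assumes "density_mat d \<rho>" and "density_mat d \<sigma>"
  shows "D_KL \<rho> \<sigma> \<le> (2 + D_inf \<rho> \<sigma>) * ereal (D_H2 \<rho> \<sigma>)"
proof -
  have psdr: "psd_mat d \<rho>" and trr: "mtrace \<rho> = 1" using assms(1) by (auto simp: density_mat_def)
  have psds: "psd_mat d \<sigma>" and trs: "mtrace \<sigma> = 1" using assms(2) by (auto simp: density_mat_def)
  have hr: "hermitian_mat d \<rho>" using psdr by (simp add: psd_mat_def)
  have hs: "hermitian_mat d \<sigma>" using psds by (simp add: psd_mat_def)
  have rc: "\<rho> \<in> carrier_mat d d" and sc: "\<sigma> \<in> carrier_mat d d" using hr hs herm_carrier by auto
  have drow: "dim_row \<rho> = d" "dim_row \<sigma> = d" using rc sc by auto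
  obtain U0 p0 where "spec_dec d \<rho> U0 p0" using spectral_exists[OF hr] by blast
  moreover obtain V0 q0 where "spec_dec d \<sigma> V0 q0" using spectral_exists[OF hs] by blast
  ultimately have exD: "\<exists>r. \<exists>U p V q. spec_dec d \<rho> U p \<and> spec_dec d \<sigma> V q \<and> r = D_inf_dec d U p V q" by blast
  have "D_inf \<rho> \<sigma> = (SOME r. \<exists>U p V q. spec_dec d \<rho> U p \<and> spec_dec d \<sigma> V q \<and> r = D_inf_dec d U p V q)"
    by (simp add: D_inf_def drow)
  with someI_ex[OF exD] obtain U p V q where d1: "spec_dec d \<rho> U p" and d2: "spec_dec d \<sigma> V q"
    and Dinf: "D_inf \<rho> \<sigma> = D_inf_dec d U p V q" by auto
  have U: "unitary_mat d U" and V: "unitary_mat d V" using d1 d2 by (auto simp: spec_dec_def)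
  have Uc: "U \<in> carrier_mat d d" and Vc: "V \<in> carrier_mat d d" using U V unitary_carrier by auto
  have p0: "\<And>i. i < d \<Longrightarrow> p i \<ge> 0" using psd_eig_nonneg[OF psdr d1] by auto
  have q0: "\<And>i. i < d \<Longrightarrow> q i \<ge> 0" using psd_eig_nonneg[OF psds d2] by auto
  have psum: "(\<Sum>i<d. p i) = 1" using trace_spec[OF d1] trr by (metis of_real_eq_1_iff)
  have qsum: "(\<Sum>i<d. q i) = 1" using trace_spec[OF d2] trs by (metis of_real_eq_1_iff)
  define W where "W = cadj U * V"
  have Wu: "unitary_mat d W" unfolding W_def by (rule unitary_mult[OF unitary_cadj[OF U] V])
  have Wc: "W \<in> carrier_mat d d" using Wu unitary_carrier by auto
  define c where "c i j = (cmod (W $$ (i,j)))\<^sup>2" for i j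
  have c0: "\<And>i j. c i j \<ge> 0" by (simp add: c_def)
  have crow: "\<And>i. i < d \<Longrightarrow> (\<Sum>j<d. c i j) = 1" using unitary_rows(1)[OF Wu] by (simp add: c_def)
  have ccol: "\<And>j. j < d \<Longrightarrow> (\<Sum>i<d. c i j) = 1" using unitary_rows(2)[OF Wu] by (simp add: c_def)
  have Wdec: "(\<Sum>k<d. cnj (U $$ (k,i)) * V $$ (k,j)) = W $$ (i,j)" if "i < d" "j < d" for i j
  proof -
    have "W $$ (i,j) = (\<Sum>k<d. cadj U $$ (i,k) * V $$ (k,j))"
      unfolding W_def using Uc Vc that by (intro mult_idx) auto
    also have "\<dots> = (\<Sum>k<d. cnj (U $$ (k,i)) * V $$ (k,j))" using Uc that by (intro sum.cong) auto
    finally show ?thesis by simp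
  qed
  define S' where "S' = {(i,j). i < d \<and> j < d \<and> p i * c i j \<noteq> 0}"
  have Seq: "{(i,j). i < d \<and> j < d \<and> p i * (cmod (\<Sum>k<d. cnj (U $$ (k,i)) * V $$ (k,j)))\<^sup>2 \<noteq> 0} = S'"
    unfolding S'_def by (auto simp: Wdec c_def)
  have Dform: "D_inf_dec d U p V q = (if \<exists>(i,j)\<in>S'. q j = 0 then \<infinity>
     else Max ((\<lambda>(i,j). ereal (ln (p i / q j))) ` S'))"
    unfolding D_inf_dec_def Let_def Seq by simp
  define T where "T = (\<Sum>i<d. \<Sum>j<d. sqrt (p i) * sqrt (q j) * c i j)"
  define H where "H = (\<Sum>i<d. \<Sum>j<d. c i j * (sqrt (p i) - sqrt (q j))\<^sup>2)"
  have DH: "D_H2 \<rho> \<sigma> = H"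
  proof -
    define Sr where "Sr = U * rdiag d (sqrt \<circ> p) * cadj U"
    define Ss where "Ss = V * rdiag d (sqrt \<circ> q) * cadj V"
    have Src: "Sr \<in> carrier_mat d d" unfolding Sr_def using Uc by (metis cadj_carrier mult_carrier_mat rdiag_carrier(1))
    have Ssc: "Ss \<in> carrier_mat d d" unfolding Ss_def using Vc by (metis cadj_carrier mult_carrier_mat rdiag_carrier(1))
    have Dc: "Sr - Ss \<in> carrier_mat d d" using Ssc by (rule minus_carrier_mat)
    have "mtrace ((Sr - Ss) * (Sr - Ss)) = mtrace (Sr * (Sr - Ss)) - mtrace (Ss * (Sr - Ss))"
      by (rule mtrace_minus_mult[OF Src Ssc Dc])
    also have "\<dots> = (mtrace (Sr * Sr) - mtrace (Sr * Ss)) - (mtrace (Ss * Sr) - mtrace (Ss * Ss))"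
      using mtrace_mult_minus_right[OF Src Src Ssc] mtrace_mult_minus_right[OF Ssc Src Ssc] by simp
    also have "mtrace (Sr * Sr) = complex_of_real (\<Sum>i<d. p i)"
    proof -
      have "mtrace (Sr * Sr) = complex_of_real (\<Sum>i<d. (sqrt \<circ> p) i * (sqrt \<circ> p) i)"
        unfolding Sr_def by (rule trace_same[OF U])
      also have "(\<Sum>i<d. (sqrt \<circ> p) i * (sqrt \<circ> p) i) = (\<Sum>i<d. p i)" using p0 by (intro sum.cong) auto
      finally show ?thesis .
    qed
    also have "mtrace (Ss * Ss) = complex_of_real (\<Sum>i<d. q i)"
    proof -
      have "mtrace (Ss * Ss) = complex_of_real (\<Sum>i<d. (sqrt \<circ> q) i * (sqrt \<circ> q) i)"
        unfolding Ss_def by (rule trace_same[OF V])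
      also have "(\<Sum>i<d. (sqrt \<circ> q) i * (sqrt \<circ> q) i) = (\<Sum>i<d. q i)" using q0 by (intro sum.cong) auto
      finally show ?thesis .
    qed
    also have "mtrace (Sr * Ss) = complex_of_real T"
    proof -
      have "mtrace (Sr * Ss) = complex_of_real (\<Sum>i<d. \<Sum>j<d. (sqrt \<circ> p) i * (sqrt \<circ> q) j * (cmod ((cadj U * V) $$ (i,j)))\<^sup>2)"
        unfolding Sr_def Ss_def by (rule trace_formula[OF U V])
      also have "(\<Sum>i<d. \<Sum>j<d. (sqrt \<circ> p) i * (sqrt \<circ> q) j * (cmod ((cadj U * V) $$ (i,j)))\<^sup>2) = T"
        unfolding T_def c_def W_def by simp
      finally show ?thesis .
    qed
    also have "mtrace (Ss * Sr) = complex_of_real T"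
    proof -
      have "mtrace (Ss * Sr) = complex_of_real (\<Sum>i<d. \<Sum>j<d. (sqrt \<circ> q) i * (sqrt \<circ> p) j * (cmod ((cadj V * U) $$ (i,j)))\<^sup>2)"
        unfolding Sr_def Ss_def by (rule trace_formula[OF V U])
      also have "cadj V * U = cadj W" unfolding W_def using Uc Vc by (simp add: cadj_mult[of _ d d _ d])
      also have "(\<Sum>i<d. \<Sum>j<d. (sqrt \<circ> q) i * (sqrt \<circ> p) j * (cmod (cadj W $$ (i,j)))\<^sup>2) =
          (\<Sum>i<d. \<Sum>j<d. sqrt (q i) * sqrt (p j) * c j i)"
        using Wc by (intro sum.cong refl) (auto simp: c_def)
      also have "\<dots> = T" unfolding T_def by (subst sum.swap) (simp add: mult.commute mult.left_commute)
      finally show ?thesis .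
    qed
    finally have tr: "mtrace ((Sr - Ss) * (Sr - Ss)) = complex_of_real ((\<Sum>i<d. p i) - 2 * T + (\<Sum>i<d. q i))"
      by simp
    have "H = (\<Sum>i<d. \<Sum>j<d. c i j * p i - 2 * (sqrt (p i) * sqrt (q j) * c i j) + c i j * q j)"
      unfolding H_def using p0 q0 by (intro sum.cong refl) (auto simp: power2_diff algebra_simps)
    also have "\<dots> = (\<Sum>i<d. \<Sum>j<d. c i j * p i) - 2 * T + (\<Sum>i<d. \<Sum>j<d. c i j * q j)"
      unfolding T_def by (simp add: sum.distrib sum_subtractf sum_distrib_left)
    also have "(\<Sum>i<d. \<Sum>j<d. c i j * p i) = (\<Sum>i<d. p i)"
      using crow by (intro sum.cong refl) (simp add: sum_distrib_right[symmetric])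
    also have "(\<Sum>i<d. \<Sum>j<d. c i j * q j) = (\<Sum>j<d. q j)"
      by (subst sum.swap) (use ccol in \<open>intro sum.cong refl, simp add: sum_distrib_right[symmetric]\<close>)
    finally have "H = (\<Sum>i<d. p i) - 2 * T + (\<Sum>i<d. q i)" .
    thus ?thesis unfolding D_H2_def tr mat_fun_eq[OF d1] mat_fun_eq[OF d2] Sr_def[symmetric] Ss_def[symmetric]
      by simp
  qed
  have Hnn: "\<And>i j. 0 \<le> c i j * (sqrt (p i) - sqrt (q j))\<^sup>2" using c0 by simp
  show ?thesis
  proof (cases "\<exists>i<d. \<exists>j<d. p i * c i j \<noteq> 0 \<and> q j = 0")
    case True
    then obtain i j where i: "i < d" and j: "j < d" and pc: "p i * c i j \<noteq> 0" and qj: "q j = 0" by blast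
    have "(i,j) \<in> S'" using i j pc by (simp add: S'_def)
    hence inf: "D_inf \<rho> \<sigma> = \<infinity>" using qj unfolding Dinf Dform by auto
    have "0 < c i j * (sqrt (p i) - sqrt (q j))\<^sup>2"
      using pc qj c0[of i j] p0[OF i] by (simp add: mult.commute)
    also have "\<dots> \<le> (\<Sum>j'<d. c i j' * (sqrt (p i) - sqrt (q j'))\<^sup>2)"
      using j Hnn by (intro member_le_sum) auto
    also have "\<dots> \<le> H" unfolding H_def using i Hnn by (intro member_le_sum sum_nonneg) auto
    finally have Hpos: "H > 0" .
    have rinf: "(2 + D_inf \<rho> \<sigma>) * ereal (D_H2 \<rho> \<sigma>) = \<infinity>" using Hpos unfolding inf DH by simp
    show ?thesis unfolding rinf by simp
  next
    case False
    hence B: "\<And>i j. i < d \<Longrightarrow> j < d \<Longrightarrow> q j = 0 \<Longrightarrow> p i * c i j = 0" by blast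
    have ker: "\<forall>v \<in> carrier_vec (dim_row \<sigma>). \<sigma> *\<^sub>v v = 0\<^sub>v (dim_row \<sigma>) \<longrightarrow> \<rho> *\<^sub>v v = 0\<^sub>v (dim_row \<rho>)"
      unfolding drow using kernel_cond[OF d1 d2] B by (auto simp: c_def W_def)
    define K where "K = (\<Sum>i<d. \<Sum>j<d. c i j * (p i * (ln (p i) - ln (q j))))"
    have DKL: "D_KL \<rho> \<sigma> = ereal K"
    proof -
      define Lr where "Lr = U * rdiag d (ln \<circ> p) * cadj U"
      define Ls where "Ls = V * rdiag d (ln \<circ> q) * cadj V"
      have Lrc: "Lr \<in> carrier_mat d d" unfolding Lr_def using Uc by (metis cadj_carrier mult_carrier_mat rdiag_carrier(1))
      have Lsc: "Ls \<in> carrier_mat d d" unfolding Ls_def using Vc by (metis cadj_carrier mult_carrier_mat rdiag_carrier(1))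
      have rho: "\<rho> = U * rdiag d p * cadj U" using d1 by (simp add: spec_dec_def)
      have "mtrace (\<rho> * (Lr - Ls)) = mtrace (\<rho> * Lr) - mtrace (\<rho> * Ls)"
        by (rule mtrace_mult_minus_right[OF rc Lrc Lsc])
      also have "mtrace (\<rho> * Lr) = complex_of_real (\<Sum>i<d. p i * (ln \<circ> p) i)"
        unfolding rho Lr_def by (rule trace_same[OF U])
      also have "(\<Sum>i<d. p i * (ln \<circ> p) i) = (\<Sum>i<d. p i * ln (p i))" by simp
      also have "mtrace (\<rho> * Ls) = complex_of_real (\<Sum>i<d. \<Sum>j<d. p i * (ln \<circ> q) j * (cmod ((cadj U * V) $$ (i,j)))\<^sup>2)"
        unfolding rho Ls_def by (rule trace_formula[OF U V])
      also have "(\<Sum>i<d. \<Sum>j<d. p i * (ln \<circ> q) j * (cmod ((cadj U * V) $$ (i,j)))\<^sup>2) = (\<Sum>i<d. \<Sum>j<d. p i * ln (q j) * c i j)"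
        by (simp add: c_def W_def)
      finally have tr: "mtrace (\<rho> * (Lr - Ls)) = complex_of_real ((\<Sum>i<d. p i * ln (p i)) - (\<Sum>i<d. \<Sum>j<d. p i * ln (q j) * c i j))"
        by simp
      have "K = (\<Sum>i<d. \<Sum>j<d. c i j * (p i * ln (p i))) - (\<Sum>i<d. \<Sum>j<d. p i * ln (q j) * c i j)"
        unfolding K_def by (simp add: sum_subtractf algebra_simps)
      also have "(\<Sum>i<d. \<Sum>j<d. c i j * (p i * ln (p i))) = (\<Sum>i<d. p i * ln (p i))"
        using crow by (intro sum.cong refl) (simp add: sum_distrib_right[symmetric])
      finally have "K = (\<Sum>i<d. p i * ln (p i)) - (\<Sum>i<d. \<Sum>j<d. p i * ln (q j) * c i j)" .
      thus ?thesis unfolding D_KL_def using ker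
        by (simp add: tr mat_fun_eq[OF d1] mat_fun_eq[OF d2] Lr_def[symmetric] Ls_def[symmetric])
    qed
    have finS: "finite S'"
      by (rule finite_subset[of _ "{..<d} \<times> {..<d}"]) (auto simp: S'_def)
    have "(\<Sum>i<d. \<Sum>j<d. p i * c i j) = 1"
      using psum crow by (simp add: sum_distrib_left[symmetric])
    hence "\<exists>i<d. \<exists>j<d. p i * c i j \<noteq> 0" by (metis (no_types, lifting) lessThan_iff sum.neutral zero_neq_one)
    hence neS: "S' \<noteq> {}" by (auto simp: S'_def)
    have qS: "\<And>i j. (i,j) \<in> S' \<Longrightarrow> q j > 0 \<and> p i > 0 \<and> c i j > 0"
    proof -
      fix i j assume "(i,j) \<in> S'"
      hence i: "i < d" and j: "j < d" and pc: "p i * c i j \<noteq> 0" by (auto simp: S'_def)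
      have "q j \<noteq> 0" using B[OF i j] pc by auto
      thus "q j > 0 \<and> p i > 0 \<and> c i j > 0" using q0[OF j] p0[OF i] c0[of i j] pc by auto
    qed
    define f where "f = (\<lambda>(i,j). ereal (ln (p i / q j)))"
    have "Max (f ` S') \<in> f ` S'" using finS neS by (intro Max_in) auto
    then obtain i0 j0 where ij0: "(i0,j0) \<in> S'" and Mx: "Max (f ` S') = ereal (ln (p i0 / q j0))"
      by (auto simp: f_def)
    define M where "M = ln (p i0 / q j0)"
    have Mge: "ln (p i / q j) \<le> M" if "(i,j) \<in> S'" for i j
    proof -
      have "f (i,j) \<le> Max (f ` S')" using finS that by (intro Max_ge) auto
      thus ?thesis unfolding Mx M_def by (simp add: f_def)
    qed
    have noq: "\<not> (\<exists>(i,j)\<in>S'. q j = 0)"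
    proof
      assume "\<exists>(i,j)\<in>S'. q j = 0"
      then obtain i j where "(i,j) \<in> S'" "q j = 0" by blast
      thus False using qS[of i j] by simp
    qed
    have DI: "D_inf \<rho> \<sigma> = ereal M" unfolding Dinf Dform using noq Mx
      by (simp add: f_def M_def)
    have M0: "M \<ge> 0"
    proof (rule ccontr)
      assume "\<not> M \<ge> 0"
      hence Mneg: "M < 0" by simp
      have lt: "p i < q j" if ij: "(i,j) \<in> S'" for i j
      proof -
        have "ln (p i / q j) < 0" using Mge[OF ij(1)] Mneg by simp
        hence "p i / q j < 1" using qS[OF ij(1)] by (simp add: ln_less_zero_iff)
        thus "p i < q j" using qS[OF ij(1)] by (simp add: field_simps)
      qed
      have "(\<Sum>(i,j)\<in>{..<d} \<times> {..<d}. c i j * p i) < (\<Sum>(i,j)\<in>{..<d} \<times> {..<d}. c i j * q j)"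
      proof (rule sum_strict_mono_ex1)
        show "finite ({..<d} \<times> {..<d})" by simp
        show "\<forall>x\<in>{..<d} \<times> {..<d}. (case x of (i,j) \<Rightarrow> c i j * p i) \<le> (case x of (i,j) \<Rightarrow> c i j * q j)"
        proof (clarify)
          fix i j assume i: "i < d" and j: "j < d"
          show "c i j * p i \<le> c i j * q j"
          proof (cases "(i,j) \<in> S'")
            case True then show ?thesis using lt[OF True] c0[of i j] by (intro mult_left_mono) auto
          next
            case False
            hence "p i * c i j = 0" using i j by (auto simp: S'_def)
            thus ?thesis using c0[of i j] q0[OF j] by (auto simp: mult.commute)
          qed
        qed
        show "\<exists>x\<in>{..<d} \<times> {..<d}. (case x of (i,j) \<Rightarrow> c i j * p i) < (case x of (i,j) \<Rightarrow> c i j * q j)"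
          using ij0 lt[OF ij0] qS[OF ij0] by (intro bexI[of _ "(i0,j0)"]) (auto simp: S'_def)
      qed
      also have "(\<Sum>(i,j)\<in>{..<d} \<times> {..<d}. c i j * q j) = (\<Sum>i<d. \<Sum>j<d. c i j * q j)"
        by (simp add: sum.cartesian_product)
      also have "\<dots> = (\<Sum>j<d. q j)"
        by (subst sum.swap) (use ccol in \<open>intro sum.cong refl, simp add: sum_distrib_right[symmetric]\<close>)
      also have "(\<Sum>(i,j)\<in>{..<d} \<times> {..<d}. c i j * p i) = (\<Sum>i<d. \<Sum>j<d. c i j * p i)"
        by (simp add: sum.cartesian_product)
      also have "\<dots> = (\<Sum>i<d. p i)"
        using crow by (intro sum.cong refl) (simp add: sum_distrib_right[symmetric])
      finally show False using psum qsum by simp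
    qed
    have Z: "(\<Sum>i<d. \<Sum>j<d. c i j * (q j - p i)) = 0"
    proof -
      have "(\<Sum>i<d. \<Sum>j<d. c i j * (q j - p i)) = (\<Sum>i<d. \<Sum>j<d. c i j * q j) - (\<Sum>i<d. \<Sum>j<d. c i j * p i)"
        by (simp add: sum_subtractf algebra_simps)
      also have "(\<Sum>i<d. \<Sum>j<d. c i j * q j) = (\<Sum>j<d. q j)"
        by (subst sum.swap) (use ccol in \<open>intro sum.cong refl, simp add: sum_distrib_right[symmetric]\<close>)
      also have "(\<Sum>i<d. \<Sum>j<d. c i j * p i) = (\<Sum>i<d. p i)"
        using crow by (intro sum.cong refl) (simp add: sum_distrib_right[symmetric])
      finally show ?thesis using psum qsum by simp
    qed
    have "K = K + (\<Sum>i<d. \<Sum>j<d. c i j * (q j - p i))" using Z by simp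
    also have "\<dots> = (\<Sum>i<d. \<Sum>j<d. c i j * (p i * (ln (p i) - ln (q j)) - p i + q j))"
      unfolding K_def by (simp add: sum.distrib[symmetric] algebra_simps)
    also have "\<dots> \<le> (\<Sum>i<d. \<Sum>j<d. (2 + M) * (c i j * (sqrt (p i) - sqrt (q j))\<^sup>2))"
    proof (intro sum_mono)
      fix i j assume i: "i \<in> {..<d}" and j: "j \<in> {..<d}"
      show "c i j * (p i * (ln (p i) - ln (q j)) - p i + q j) \<le> (2 + M) * (c i j * (sqrt (p i) - sqrt (q j))\<^sup>2)"
      proof (rule term_bound[OF c0 p0 q0 M0])
        assume "p i * c i j \<noteq> 0"
        hence "(i,j) \<in> S'" using i j by (simp add: S'_def)
        thus "q j > 0 \<and> ln (p i / q j) \<le> M" using qS Mge by auto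
      qed (use i j in auto)
    qed
    also have "\<dots> = (2 + M) * H" unfolding H_def by (simp add: sum_distrib_left)
    finally have KH: "K \<le> (2 + M) * H" .
    show ?thesis unfolding DKL DI DH using KH by simp
  qed
qed

end
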